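(* For $m\ge 2$: $\mathrm{Spec}(\Gamma_{U_{6m}})=\{[0]^{2m-2},[m]^1,[-m]^1\}$, $\mathrm{L\text{-}Spec}(\Gamma_{U_{6m}})=\mathrm{Q\text{-}Spec}(\Gamma_{U_{6m}})=\{[0]^1,[m]^{2m-2},[2m]^1\}$, and $E(\Gamma_{U_{6m}})=LE(\Gamma_{U_{6m}})=SE(\Gamma_{U_{6m}})=2m$.
   Context: $U_{6m}=\langle x,y\mid x^{2m}=y^3=1,\ x^{-1}yx=y^{-1}\rangle$. For a finite non-abelian group $G$ with center $Z(G)$, the NCCC-graph $\Gamma_G$ has vertex set $\{x^G: x\in G\setminus Z(G)\}$ ($x^G$ the conjugacy class of $x$), distinct vertices $x^G,y^G$ adjacent iff $x'y'\neq y'x'$ for all $x'\in x^G,y'\in y^G$. For a simple graph with adjacency matrix $A$, degree matrix $D$, $L=D-A$, $Q=D+A$; Spec, L-Spec, Q-Spec are eigenvalue multisets of $A,L,Q$, $[\lambda]^k$ meaning eigenvalue $\lambda$ of multiplicity $k$. $E=\sum_{\lambda\in\mathrm{Spec}}|\lambda|$; with $\Delta=2|E(\mathcal G)|/|V(\mathcal G)|$, $LE=\sum_{\beta\in\mathrm{L\text{-}Spec}}|\beta-\Delta|$, $SE=\sum_{\gamma\in\mathrm{Q\text{-}Spec}}|\gamma-\Delta|$. *)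

theory Defs
  imports "HOL-Algebra.Group" "Jordan_Normal_Form.Char_Poly"
begin

text \<open>Concrete model of U_{6m} = < x, y | x^(2m) = y^3 = 1, x^-1 y x = y^-1 >:
  the element x^a y^b (0 <= a < 2m, 0 <= b < 3) is the pair (a, b).
  Since y^b x^c = x^c y^(b (-1)^c), the product is
  (x^a y^b)(x^c y^d) = x^(a+c) y^(b (-1)^c + d).\<close>

definition U6m :: "nat \<Rightarrow> (nat \<times> nat) monoid" where
  "U6m m = \<lparr> carrier = {0..<2*m} \<times> {0..<3},
     mult = (\<lambda>(a, b) (c, d).
               ((a + c) mod (2*m), ((if even c then b else (3 - b) mod 3) + d) mod 3)),
     one = (0, 0) \<rparr>"

definition group_center :: "('a, 'b) monoid_scheme \<Rightarrow> 'a set" where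
  "group_center G = {z \<in> carrier G. \<forall>g \<in> carrier G. z \<otimes>\<^bsub>G\<^esub> g = g \<otimes>\<^bsub>G\<^esub> z}"

definition conj_class :: "('a, 'b) monoid_scheme \<Rightarrow> 'a \<Rightarrow> 'a set" where
  "conj_class G x = {g \<otimes>\<^bsub>G\<^esub> x \<otimes>\<^bsub>G\<^esub> inv\<^bsub>G\<^esub> g | g. g \<in> carrier G}"

definition nccc_vertices :: "('a, 'b) monoid_scheme \<Rightarrow> 'a set set" where
  "nccc_vertices G = conj_class G ` (carrier G - group_center G)"

definition nccc_adj :: "('a, 'b) monoid_scheme \<Rightarrow> 'a set \<Rightarrow> 'a set \<Rightarrow> bool" where
  "nccc_adj G C D \<longleftrightarrow> C \<noteq> D \<and>
     (\<forall>x \<in> C. \<forall>y \<in> D. x \<otimes>\<^bsub>G\<^esub> y \<noteq> y \<otimes>\<^bsub>G\<^esub> x)"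

text \<open>A fixed enumeration of the (finite) vertex set by 0..card V - 1.
  The spectra below do not depend on the choice of enumeration.\<close>
definition vertex_enum :: "'v set \<Rightarrow> nat \<Rightarrow> 'v" where
  "vertex_enum V = (SOME f. bij_betw f {0..<card V} V)"

definition graph_degree :: "'v set \<Rightarrow> ('v \<Rightarrow> 'v \<Rightarrow> bool) \<Rightarrow> 'v \<Rightarrow> nat" where
  "graph_degree V Adj v = card {w \<in> V. Adj v w}"

definition adj_matrix :: "'v set \<Rightarrow> ('v \<Rightarrow> 'v \<Rightarrow> bool) \<Rightarrow> complex mat" where
  "adj_matrix V Adj = mat (card V) (card V)
     (\<lambda>(i, j). if Adj (vertex_enum V i) (vertex_enum V j) then 1 else 0)"

definition degree_matrix :: "'v set \<Rightarrow> ('v \<Rightarrow> 'v \<Rightarrow> bool) \<Rightarrow> complex mat" where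
  "degree_matrix V Adj = mat (card V) (card V)
     (\<lambda>(i, j). if i = j then of_nat (graph_degree V Adj (vertex_enum V i)) else 0)"

definition laplacian_matrix :: "'v set \<Rightarrow> ('v \<Rightarrow> 'v \<Rightarrow> bool) \<Rightarrow> complex mat" where
  "laplacian_matrix V Adj = degree_matrix V Adj - adj_matrix V Adj"

definition signless_laplacian_matrix :: "'v set \<Rightarrow> ('v \<Rightarrow> 'v \<Rightarrow> bool) \<Rightarrow> complex mat" where
  "signless_laplacian_matrix V Adj = degree_matrix V Adj + adj_matrix V Adj"

definition mat_spectrum :: "complex mat \<Rightarrow> complex multiset" where
  "mat_spectrum A = proots (char_poly A)"

definition Spec :: "'v set \<Rightarrow> ('v \<Rightarrow> 'v \<Rightarrow> bool) \<Rightarrow> complex multiset" where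
  "Spec V Adj = mat_spectrum (adj_matrix V Adj)"

definition L_Spec :: "'v set \<Rightarrow> ('v \<Rightarrow> 'v \<Rightarrow> bool) \<Rightarrow> complex multiset" where
  "L_Spec V Adj = mat_spectrum (laplacian_matrix V Adj)"

definition Q_Spec :: "'v set \<Rightarrow> ('v \<Rightarrow> 'v \<Rightarrow> bool) \<Rightarrow> complex multiset" where
  "Q_Spec V Adj = mat_spectrum (signless_laplacian_matrix V Adj)"

definition num_edges :: "'v set \<Rightarrow> ('v \<Rightarrow> 'v \<Rightarrow> bool) \<Rightarrow> nat" where
  "num_edges V Adj = card {{v, w} | v w. v \<in> V \<and> w \<in> V \<and> Adj v w}"

definition avg_degree :: "'v set \<Rightarrow> ('v \<Rightarrow> 'v \<Rightarrow> bool) \<Rightarrow> real" where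
  "avg_degree V Adj = 2 * real (num_edges V Adj) / real (card V)"

definition energy :: "'v set \<Rightarrow> ('v \<Rightarrow> 'v \<Rightarrow> bool) \<Rightarrow> real" where
  "energy V Adj = (\<Sum>e\<in>#Spec V Adj. cmod e)"

definition laplacian_energy :: "'v set \<Rightarrow> ('v \<Rightarrow> 'v \<Rightarrow> bool) \<Rightarrow> real" where
  "laplacian_energy V Adj =
     (\<Sum>\<beta>\<in>#L_Spec V Adj. cmod (\<beta> - complex_of_real (avg_degree V Adj)))"

definition signless_laplacian_energy :: "'v set \<Rightarrow> ('v \<Rightarrow> 'v \<Rightarrow> bool) \<Rightarrow> real" where
  "signless_laplacian_energy V Adj =
     (\<Sum>\<gamma>\<in>#Q_Spec V Adj. cmod (\<gamma> - complex_of_real (avg_degree V Adj)))"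

end

theory Submission
  imports Defs
begin


definition sg :: "(nat \<Rightarrow> bool) \<Rightarrow> nat \<Rightarrow> complex" where
  "sg s k = (if s k then 1 else -1)"

definition Pm :: "nat \<Rightarrow> (nat \<Rightarrow> bool) \<Rightarrow> nat \<Rightarrow> nat \<Rightarrow> complex mat" where
  "Pm n s p q = mat n n (\<lambda>(k,j). if j = p then 1 else if j = q then sg s k
      else (if k = j then 1 else 0) - (if k = (if s j then p else q) then 1 else 0))"

definition Qm :: "nat \<Rightarrow> nat \<Rightarrow> (nat \<Rightarrow> bool) \<Rightarrow> nat \<Rightarrow> nat \<Rightarrow> complex mat" where
  "Qm n m s p q = mat n n (\<lambda>(i,k). if i = p then 1 / (2 * of_nat m) else if i = q then sg s k / (2 * of_nat m)
      else (if i = k then 1 else 0) - (if s i = s k then 1 / of_nat m else 0))"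

definition Mm :: "nat \<Rightarrow> (nat \<Rightarrow> bool) \<Rightarrow> complex \<Rightarrow> complex \<Rightarrow> complex mat" where
  "Mm n s a b = mat n n (\<lambda>(i,j). (if i = j then a else 0) + (if s i \<noteq> s j then b else 0))"

definition Dm :: "nat \<Rightarrow> nat \<Rightarrow> nat \<Rightarrow> nat \<Rightarrow> complex \<Rightarrow> complex \<Rightarrow> complex mat" where
  "Dm n m p q a b = mat n n (\<lambda>(i,j). if i = j then (if i = p then a + b * of_nat m
      else if i = q then a - b * of_nat m else a) else 0)"

lemma proots_lin: "proots (\<Prod>x\<leftarrow>xs. [:- x, 1:]) = mset xs"
proof (induction xs)
  case (Cons x xs)
  have nz: "(\<Prod>x\<leftarrow>xs. [:- x, 1:]) \<noteq> 0" by (auto simp: prod_list_zero_iff)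
  have "(\<Prod>x\<leftarrow>x#xs. [:- x, 1:]) = [:- x, 1:] * (\<Prod>x\<leftarrow>xs. [:- x, 1:])" by simp
  then have "proots (\<Prod>x\<leftarrow>x#xs. [:- x, 1:]) = proots [:- x, 1:] + proots (\<Prod>x\<leftarrow>xs. [:- x, 1:])"
    using proots_mult[of "[:- x, 1:]", OF _ nz] by simp
  then show ?case using Cons by simp
qed simp

context
  fixes n m :: nat and s :: "nat \<Rightarrow> bool" and p q :: nat
  assumes cT: "card {i\<in>{0..<n}. s i} = m" and cF: "card {i\<in>{0..<n}. \<not> s i} = m"
    and m0: "m > 0" and pn: "p < n" and sp: "s p" and qn: "q < n" and sq: "\<not> s q"
begin

lemma sum_side: "(\<Sum>k\<in>{0..<n}. if s k = t then (c::complex) else 0) = of_nat m * c"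
proof -
  have "(\<Sum>k\<in>{0..<n}. if s k = t then c else 0) = (\<Sum>k\<in>{k\<in>{0..<n}. s k = t}. c)"
    by (rule sum.inter_filter[symmetric]) simp
  also have "\<dots> = of_nat (card {k\<in>{0..<n}. s k = t}) * c" by simp
  also have "card {k\<in>{0..<n}. s k = t} = m" using cT cF by (cases t) auto
  finally show ?thesis .
qed

lemma sum_side_sg: "(\<Sum>k\<in>{0..<n}. if s k = t then sg s k else 0) = of_nat m * (if t then 1 else -1)"
proof -
  have "(\<Sum>k\<in>{0..<n}. if s k = t then sg s k else 0) = (\<Sum>k\<in>{0..<n}. if s k = t then (if t then 1 else -1) else 0)"
    by (rule sum.cong) (auto simp: sg_def)
  then show ?thesis by (simp add: sum_side)
qed

lemma sum_sg: "(\<Sum>k\<in>{0..<n}. sg s k) = 0"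
proof -
  have "(\<Sum>k\<in>{0..<n}. sg s k) = (\<Sum>k\<in>{0..<n}. (if s k = True then sg s k else 0) + (if s k = False then sg s k else 0))"
    by (rule sum.cong) auto
  also have "\<dots> = 0" by (simp only: sum.distrib sum_side_sg) simp
  finally show ?thesis .
qed

lemma sum_sg2: "(\<Sum>k\<in>{0..<n}. sg s k * sg s k) = 2 * of_nat m"
proof -
  have "(\<Sum>k\<in>{0..<n}. sg s k * sg s k) = (\<Sum>k\<in>{0..<n}. (if s k = True then 1 else 0) + (if s k = False then 1 else 0))"
    by (rule sum.cong) (auto simp: sg_def)
  also have "\<dots> = 2 * of_nat m" by (simp only: sum.distrib sum_side) simp
  finally show ?thesis .
qed

lemma n_eq: "n = 2 * m"
proof -
  have "{0..<n} = {i\<in>{0..<n}. s i} \<union> {i\<in>{0..<n}. \<not> s i}" by auto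
  then have "card {0..<n} = card {i\<in>{0..<n}. s i} + card {i\<in>{0..<n}. \<not> s i}"
    by (metis (no_types, lifting) card_Un_disjoint disjoint_iff finite_Un finite_atLeastLessThan mem_Collect_eq)
  then show ?thesis using cT cF by simp
qed

lemma pq: "p \<noteq> q" using sp sq by auto

lemma colP: assumes j: "j < n"
  shows "(\<Sum>k\<in>{0..<n}. w k * Pm n s p q $$ (k,j)) = (if j = p then (\<Sum>k\<in>{0..<n}. w k)
     else if j = q then (\<Sum>k\<in>{0..<n}. w k * sg s k) else w j - w (if s j then p else q))"
proof -
  have "(\<Sum>k\<in>{0..<n}. w k * Pm n s p q $$ (k,j)) = (\<Sum>k\<in>{0..<n}. w k * (if j = p then 1 else if j = q then sg s k
      else (if k = j then 1 else 0) - (if k = (if s j then p else q) then 1 else 0)))"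
    by (rule sum.cong) (use j in \<open>auto simp: Pm_def\<close>)
  also have "\<dots> = (if j = p then (\<Sum>k\<in>{0..<n}. w k)
     else if j = q then (\<Sum>k\<in>{0..<n}. w k * sg s k) else w j - w (if s j then p else q))"
  proof (cases "j = p")
    case True then show ?thesis by simp
  next
    case False
    show ?thesis
    proof (cases "j = q")
      case True then show ?thesis using False by simp
    next
      case F2: False
      have "(\<Sum>k\<in>{0..<n}. w k * (if j = p then 1 else if j = q then sg s k
      else (if k = j then 1 else 0) - (if k = (if s j then p else q) then 1 else 0)))
        = (\<Sum>k\<in>{0..<n}. (if k = j then w k else 0) - (if k = (if s j then p else q) then w k else 0))"
        by (rule sum.cong) (use False F2 in auto)
      also have "\<dots> = w j - w (if s j then p else q)"
        unfolding sum_subtractf using j pn qn by (simp add: sum.delta)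
      finally show ?thesis using False F2 by simp
    qed
  qed
  finally show ?thesis .
qed


lemma sum_const_c: "(\<Sum>k\<in>{0..<n}. (c::complex)) = 2 * of_nat m * c"
  using n_eq by simp

lemma QP: "Qm n m s p q * Pm n s p q = 1\<^sub>m n"
proof (rule eq_matI)
  fix i j assume i: "i < dim_row (1\<^sub>m n :: complex mat)" and j: "j < dim_col (1\<^sub>m n :: complex mat)"
  then have i: "i < n" and j: "j < n" by auto
  have mne: "(of_nat m :: complex) \<noteq> 0" using m0 by simp
  have "(Qm n m s p q * Pm n s p q) $$ (i,j) = (\<Sum>k\<in>{0..<n}. Qm n m s p q $$ (i,k) * Pm n s p q $$ (k,j))"
    using i j by (simp add: Qm_def Pm_def scalar_prod_def)
  also have "\<dots> = 1\<^sub>m n $$ (i,j)"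
  proof (cases "i = p")
    case True
    have A: "(\<Sum>k\<in>{0..<n}. Qm n m s p q $$ (i,k) * Pm n s p q $$ (k,j)) = (\<Sum>k\<in>{0..<n}. (\<lambda>k. 1 / (2 * of_nat m)) k * Pm n s p q $$ (k,j))"
      by (rule sum.cong) (use True pn in \<open>auto simp: Qm_def\<close>)
    have e1: "(\<Sum>k\<in>{0..<n}. 1 / (2 * of_nat m) * sg s k) = 0"
      unfolding sum_distrib_left[symmetric] sum_sg by simp
    have e2: "(\<Sum>k\<in>{0..<n}. 1 / (2 * of_nat m)) = (1::complex)"
      using n_eq mne by simp
    show ?thesis unfolding A colP[OF j, of "\<lambda>k. 1 / (2 * of_nat m)"] e1 e2
      using True i j pq by simp
  next
    case False
    show ?thesis
    proof (cases "i = q")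
      case True
      have A: "(\<Sum>k\<in>{0..<n}. Qm n m s p q $$ (i,k) * Pm n s p q $$ (k,j)) = (\<Sum>k\<in>{0..<n}. (\<lambda>k. sg s k / (2 * of_nat m)) k * Pm n s p q $$ (k,j))"
        by (rule sum.cong) (use True pq qn in \<open>auto simp: Qm_def\<close>)
      have e1: "(\<Sum>k\<in>{0..<n}. sg s k / (2 * of_nat m)) = 0"
        by (simp add: sum_divide_distrib[symmetric] sum_sg)
      have e2: "(\<Sum>k\<in>{0..<n}. sg s k / (2 * of_nat m) * sg s k) = 1"
      proof -
        have "(\<Sum>k\<in>{0..<n}. sg s k / (2 * of_nat m) * sg s k) = (\<Sum>k\<in>{0..<n}. sg s k * sg s k) / (2 * of_nat m)"
          by (simp add: sum_divide_distrib)
        then show ?thesis using sum_sg2 mne by simp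
      qed
      have e3: "sg s j / (2 * of_nat m) - sg s (if s j then p else q) / (2 * of_nat m) = 0"
        using sp sq by (simp add: sg_def)
      show ?thesis unfolding A colP[OF j, of "\<lambda>k. sg s k / (2 * of_nat m)"] e1 e2 e3
        using True pq i j by simp
    next
      case F2: False
      have A: "(\<Sum>k\<in>{0..<n}. Qm n m s p q $$ (i,k) * Pm n s p q $$ (k,j)) = (\<Sum>k\<in>{0..<n}. 
         (\<lambda>k. (if i = k then 1 else 0) - (if s i = s k then 1 / of_nat m else 0)) k * Pm n s p q $$ (k,j))"
        by (rule sum.cong) (use False F2 i in \<open>auto simp: Qm_def\<close>)
      have s1: "(\<Sum>k\<in>{0..<n}. (if i = k then 1 else 0) - (if s i = s k then 1 / of_nat m else 0)) = (0::complex)"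
      proof -
        have "(\<Sum>k\<in>{0..<n}. (if i = k then 1 else 0) - (if s i = s k then 1 / of_nat m else 0))
          = (\<Sum>k\<in>{0..<n}. (if k = i then 1 else 0)) - (\<Sum>k\<in>{0..<n}. (if s k = s i then 1 / of_nat m else (0::complex)))"
          unfolding sum_subtractf by (intro arg_cong2[where f = minus] sum.cong) auto
        also have "\<dots> = 0" unfolding sum_side using i mne by (simp add: sum.delta)
        finally show ?thesis .
      qed
      have s2: "(\<Sum>k\<in>{0..<n}. ((if i = k then 1 else 0) - (if s i = s k then 1 / of_nat m else 0)) * sg s k) = (0::complex)"
      proof -
        have "(\<Sum>k\<in>{0..<n}. ((if i = k then 1 else 0) - (if s i = s k then 1 / of_nat m else 0)) * sg s k)
          = (\<Sum>k\<in>{0..<n}. (if k = i then sg s k else 0)) - (\<Sum>k\<in>{0..<n}. (if s k = s i then sg s k else 0)) / of_nat m"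
          unfolding sum_divide_distrib sum_subtractf[symmetric] by (rule sum.cong) (auto simp: algebra_simps)
        also have "\<dots> = 0" unfolding sum_side_sg using i mne by (simp add: sum.delta sg_def)
        finally show ?thesis .
      qed
      have s3: "((if i = j then 1 else 0) - (if s i = s j then 1 / of_nat m else 0)) -
          ((if i = (if s j then p else q) then 1 else 0) - (if s i = s (if s j then p else q) then 1 / of_nat m else 0))
         = (if i = j then 1 else (0::complex))"
        using sp sq False F2 by auto
      show ?thesis unfolding A colP[OF j, of "\<lambda>k. (if i = k then 1 else 0) - (if s i = s k then 1 / of_nat m else 0)"] s1 s2 s3
        using i j False F2 by simp
    qed
  qed
  finally show "(Qm n m s p q * Pm n s p q) $$ (i,j) = 1\<^sub>m n $$ (i,j)" .
qed (auto simp: Qm_def Pm_def)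


lemma MP: "Mm n s a b * Pm n s p q = Pm n s p q * Dm n m p q a b"
proof (rule eq_matI)
  fix i j assume i: "i < dim_row (Pm n s p q * Dm n m p q a b)" and j: "j < dim_col (Pm n s p q * Dm n m p q a b)"
  then have i: "i < n" and j: "j < n" by (auto simp: Pm_def Dm_def)
  have "(Mm n s a b * Pm n s p q) $$ (i,j) = (\<Sum>k\<in>{0..<n}. Mm n s a b $$ (i,k) * Pm n s p q $$ (k,j))"
    using i j by (simp add: Mm_def Pm_def scalar_prod_def)
  also have "\<dots> = (\<Sum>k\<in>{0..<n}. (\<lambda>k. (if i = k then a else 0) + (if s i \<noteq> s k then b else 0)) k * Pm n s p q $$ (k,j))"
    by (rule sum.cong) (use i in \<open>auto simp: Mm_def\<close>)
  also note colP[OF j, of "\<lambda>k. (if i = k then a else 0) + (if s i \<noteq> s k then b else 0)"]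
  finally have L: "(Mm n s a b * Pm n s p q) $$ (i,j) = (if j = p then \<Sum>k = 0..<n. (if i = k then a else 0) + (if s i \<noteq> s k then b else 0)
     else if j = q then \<Sum>k = 0..<n. ((if i = k then a else 0) + (if s i \<noteq> s k then b else 0)) * sg s k
          else (if i = j then a else 0) + (if s i \<noteq> s j then b else 0) - ((if i = (if s j then p else q) then a else 0) +
                (if s i \<noteq> s (if s j then p else q) then b else 0)))" .
  have "(Pm n s p q * Dm n m p q a b) $$ (i,j) = (\<Sum>k\<in>{0..<n}. Pm n s p q $$ (i,k) * Dm n m p q a b $$ (k,j))"
    using i j by (simp add: Dm_def Pm_def scalar_prod_def)
  also have "\<dots> = (\<Sum>k\<in>{0..<n}. if k = j then Pm n s p q $$ (i,j) * Dm n m p q a b $$ (j,j) else 0)"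
    by (rule sum.cong) (use j in \<open>auto simp: Dm_def\<close>)
  also have "\<dots> = Pm n s p q $$ (i,j) * Dm n m p q a b $$ (j,j)" using j by (simp add: sum.delta)
  finally have R: "(Pm n s p q * Dm n m p q a b) $$ (i,j) = Pm n s p q $$ (i,j) * Dm n m p q a b $$ (j,j)" .
  have s1: "(\<Sum>k = 0..<n. (if i = k then a else 0) + (if s i \<noteq> s k then b else 0)) = a + b * of_nat m"
  proof -
    have "(\<Sum>k = 0..<n. (if i = k then a else 0) + (if s i \<noteq> s k then b else 0))
       = (\<Sum>k = 0..<n. (if k = i then a else 0)) + (\<Sum>k = 0..<n. (if s k = (\<not> s i) then b else 0))"
      unfolding sum.distrib by (intro arg_cong2[where f = plus] sum.cong) auto
    then show ?thesis unfolding sum_side using i by (simp add: sum.delta mult.commute)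
  qed
  have s2: "(\<Sum>k = 0..<n. ((if i = k then a else 0) + (if s i \<noteq> s k then b else 0)) * sg s k) = sg s i * (a - b * of_nat m)"
  proof -
    have "(\<Sum>k = 0..<n. ((if i = k then a else 0) + (if s i \<noteq> s k then b else 0)) * sg s k)
       = (\<Sum>k = 0..<n. (if k = i then a * sg s k else 0)) + b * (\<Sum>k = 0..<n. (if s k = (\<not> s i) then sg s k else 0))"
      unfolding sum_distrib_left sum.distrib[symmetric] by (rule sum.cong) (auto simp: algebra_simps)
    then show ?thesis unfolding sum_side_sg using i by (simp add: sum.delta sg_def algebra_simps)
  qed
  show "(Mm n s a b * Pm n s p q) $$ (i,j) = (Pm n s p q * Dm n m p q a b) $$ (i,j)"
    unfolding L R s1 s2 using i j pn qn pq sp sq by (auto simp: Pm_def Dm_def)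
qed (auto simp: Mm_def Pm_def Dm_def)

lemma PQ: "Pm n s p q * Qm n m s p q = 1\<^sub>m n"
  by (rule mat_mult_left_right_inverse[OF _ _ QP]) (auto simp: Pm_def Qm_def)

lemma sim: "similar_mat (Mm n s a b) (Dm n m p q a b)"
proof (rule similar_matI[where P = "Pm n s p q" and Q = "Qm n m s p q" and n = n])
  show "{Mm n s a b, Dm n m p q a b, Pm n s p q, Qm n m s p q} \<subseteq> carrier_mat n n"
    by (auto simp: Mm_def Dm_def Pm_def Qm_def)
  show "Pm n s p q * Qm n m s p q = 1\<^sub>m n" by (rule PQ)
  show "Qm n m s p q * Pm n s p q = 1\<^sub>m n" by (rule QP)
  have c: "Mm n s a b \<in> carrier_mat n n" "Pm n s p q \<in> carrier_mat n n" "Qm n m s p q \<in> carrier_mat n n"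
     "Dm n m p q a b \<in> carrier_mat n n"
    by (auto simp: Mm_def Dm_def Pm_def Qm_def)
  have "Mm n s a b = Mm n s a b * (Pm n s p q * Qm n m s p q)" using c PQ by simp
  also have "\<dots> = (Mm n s a b * Pm n s p q) * Qm n m s p q" using c by (simp add: assoc_mult_mat)
  also have "\<dots> = Pm n s p q * Dm n m p q a b * Qm n m s p q" unfolding MP ..
  finally show "Mm n s a b = Pm n s p q * Dm n m p q a b * Qm n m s p q" .
qed

lemma spec_M: "proots (char_poly (Mm n s a b)) = replicate_mset (n - 2) a + {# a + b * of_nat m, a - b * of_nat m #}"
proof -
  let ?D = "Dm n m p q a b"
  have cD: "?D \<in> carrier_mat n n" by (simp add: Dm_def)
  have ut: "upper_triangular ?D" by (auto simp: Dm_def upper_triangular_def)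
  have "char_poly (Mm n s a b) = char_poly ?D" by (rule char_poly_similar[OF sim])
  also have "\<dots> = (\<Prod>x\<leftarrow>diag_mat ?D. [:- x, 1:])" by (rule char_poly_upper_triangular[OF cD ut])
  finally have cp: "char_poly (Mm n s a b) = (\<Prod>x\<leftarrow>diag_mat ?D. [:- x, 1:])" .
  have pr: "proots (char_poly (Mm n s a b)) = mset (diag_mat ?D)" unfolding cp by (rule proots_lin)
  define f where "f i = (if i = p then a + b * of_nat m else if i = q then a - b * of_nat m else a)" for i
  have dr: "dim_row ?D = n" by (simp add: Dm_def)
  have "mset (diag_mat ?D) = image_mset f (mset_set {0..<n})"
    unfolding diag_mat_def dr mset_map mset_upt by (rule image_mset_cong) (auto simp: Dm_def f_def)
  also have "{0..<n} = insert p (insert q ({0..<n} - {p, q}))" using pn qn by auto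
  also have "image_mset f (mset_set \<dots>) = {# f p, f q #} + image_mset f (mset_set ({0..<n} - {p, q}))"
    using pq by simp
  also have "image_mset f (mset_set ({0..<n} - {p, q})) = image_mset (\<lambda>_. a) (mset_set ({0..<n} - {p, q}))"
    by (rule image_mset_cong) (auto simp: f_def)
  also have "\<dots> = replicate_mset (n - 2) a"
    using pn qn pq by (simp add: image_mset_const_eq card_Diff_subset numeral_2_eq_2)
  finally show ?thesis using pr pq by (simp add: f_def add.commute)
qed

end


lemma mult_U: "(a,b) \<otimes>\<^bsub>U6m m\<^esub> (c,d) = ((a+c) mod (2*m), ((if even c then b else (3-b) mod 3) + d) mod 3)"
  by (simp add: U6m_def)

lemma carrier_U: "carrier (U6m m) = {0..<2*m} \<times> {0..<3}" by (simp add: U6m_def)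
lemma one_U: "\<one>\<^bsub>U6m m\<^esub> = (0,0)" by (simp add: U6m_def)

lemma L1: "a < N \<Longrightarrow> c < (N::nat) \<Longrightarrow> (a + c) mod N = 0 \<Longrightarrow> c = (N - a) mod N"
proof -
  assume a: "a < N" and c: "c < N" and h: "(a + c) mod N = 0"
  have "a + c < 2 * N" using a c by simp
  moreover from h obtain k where "a + c = N * k" by (auto simp: mod_eq_0_iff_dvd elim!: dvdE)
  ultimately have "N * k < N * 2" by simp
  then have "k < 2" by (simp add: mult_less_cancel1)
  then have "k = 0 \<or> k = 1" by arith
  then show ?thesis using \<open>a + c = N * k\<close> a c by auto
qed

lemma lt3: "(d::nat) < 3 \<longleftrightarrow> d = 0 \<or> d = 1 \<or> d = 2" by auto

lemma nd32: "\<not> (3::nat) dvd Suc (Suc 0)" by presburger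

lemma L3: "even (N::nat) \<Longrightarrow> even (x mod N) \<longleftrightarrow> even x"
  by (metis dvd_mod_iff)

lemma L2: "even (N::nat) \<Longrightarrow> a < N \<Longrightarrow> even ((N - a) mod N) \<longleftrightarrow> even a"
  by (simp add: L3)

lemma L4: "a < N \<Longrightarrow> c < (N::nat) \<Longrightarrow> ((c + a) mod N + (N - c) mod N) mod N = a"
proof (cases "c = 0")
  case True
  then show "a < N \<Longrightarrow> c < (N::nat) \<Longrightarrow> ((c + a) mod N + (N - c) mod N) mod N = a" by simp
next
  case False
  assume a: "a < N" and c: "c < N"
  have "((c + a) mod N + (N - c) mod N) mod N = (c + a + (N - c)) mod N" by (simp add: mod_add_eq)
  also have "c + a + (N - c) = a + N" using c by simp
  finally show ?thesis using a by simp
qed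

lemma inv_U: assumes m: "m > 0" and a: "a < 2*m" and b: "b < 3"
  shows "inv\<^bsub>U6m m\<^esub> (a,b) = ((2*m - a) mod (2*m), (if even a then 3 - b else b) mod 3)"
proof -
  let ?y = "((2*m - a) mod (2*m), (if even a then 3 - b else b) mod 3)"
  have ev: "even ((2*m - a) mod (2*m)) \<longleftrightarrow> even a" using a by (simp add: L2)
  have f1: "(a + (2*m - a) mod (2*m)) mod (2*m) = 0"
    using L4[of 0 "2*m" a] a by simp
  have f2: "((2*m - a) mod (2*m) + a) mod (2*m) = 0"
    using f1 by (simp add: add.commute)
  have yc: "?y \<in> carrier (U6m m)" using m by (simp add: carrier_U)
  have yr: "(a,b) \<otimes>\<^bsub>U6m m\<^esub> ?y = \<one>\<^bsub>U6m m\<^esub>"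
    unfolding mult_U one_U using f1 ev b by (auto simp: lt3)
  have yl: "?y \<otimes>\<^bsub>U6m m\<^esub> (a,b) = \<one>\<^bsub>U6m m\<^esub>"
    unfolding mult_U one_U using f2 ev b by (auto simp: lt3)
  show ?thesis unfolding m_inv_def
  proof (rule the_equality)
    fix z assume z: "z \<in> carrier (U6m m) \<and> (a,b) \<otimes>\<^bsub>U6m m\<^esub> z = \<one>\<^bsub>U6m m\<^esub> \<and> z \<otimes>\<^bsub>U6m m\<^esub> (a,b) = \<one>\<^bsub>U6m m\<^esub>"
    obtain c d where zcd: "z = (c,d)" by fastforce
    have c: "c < 2*m" and d: "d < 3" using z zcd by (auto simp: carrier_U)
    have e1: "(a + c) mod (2*m) = 0" and e2: "((if even c then b else (3-b) mod 3) + d) mod 3 = 0"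
      using z zcd by (auto simp: mult_U one_U)
    have cc: "c = (2*m - a) mod (2*m)" using L1[OF a c e1] .
    have "even c \<longleftrightarrow> even a" using ev cc by simp
    then have "d = (if even a then 3 - b else b) mod 3" using e2 b d
      by (auto simp: lt3 nd32)
    then show "z = ?y" using zcd cc by simp
  qed (use yc yr yl in auto)
qed


definition H :: "bool \<Rightarrow> bool \<Rightarrow> nat \<Rightarrow> nat \<Rightarrow> nat" where
  "H ea ec b d = ((if ec then ((if ea then d else (3-d) mod 3) + b) mod 3
      else (3 - ((if ea then d else (3-d) mod 3) + b) mod 3) mod 3) + (if ec then 3 - d else d) mod 3) mod 3"

lemma conj_U: assumes m: "m > 0" and a: "a < 2*m" and b: "b < 3" and c: "c < 2*m" and d: "d < 3"
  shows "(c,d) \<otimes>\<^bsub>U6m m\<^esub> (a,b) \<otimes>\<^bsub>U6m m\<^esub> inv\<^bsub>U6m m\<^esub> (c,d) = (a, H (even a) (even c) b d)"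
proof -
  have ev: "even ((2*m - c) mod (2*m)) \<longleftrightarrow> even c" using c by (simp add: L2)
  show ?thesis unfolding inv_U[OF m c d] mult_U using L4[OF a c] ev by (simp add: H_def)
qed

lemma conj_class_U: assumes m: "m > 0" and a: "a < 2*m" and b: "b < 3"
  shows "conj_class (U6m m) (a,b) = {a} \<times> {H (even a) e b d | e d. d < 3}"
proof (rule Set.set_eqI)
  fix z
  show "z \<in> conj_class (U6m m) (a,b) \<longleftrightarrow> z \<in> {a} \<times> {H (even a) e b d | e d. d < 3}"
  proof
    assume "z \<in> conj_class (U6m m) (a,b)"
    then obtain g where g: "g \<in> carrier (U6m m)" and z: "z = g \<otimes>\<^bsub>U6m m\<^esub> (a,b) \<otimes>\<^bsub>U6m m\<^esub> inv\<^bsub>U6m m\<^esub> g"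
      unfolding conj_class_def by blast
    obtain c d where gcd: "g = (c,d)" by fastforce
    have c: "c < 2*m" and d: "d < 3" using g gcd by (auto simp: carrier_U)
    show "z \<in> {a} \<times> {H (even a) e b d | e d. d < 3}"
      unfolding z gcd conj_U[OF m a b c d] using d by blast
  next
    assume "z \<in> {a} \<times> {H (even a) e b d | e d. d < 3}"
    then obtain e d where z: "z = (a, H (even a) e b d)" and d: "d < 3" by blast
    define c where "c = (if e then 0 else 1::nat)"
    have c: "c < 2*m" using m by (simp add: c_def)
    have ec: "even c = e" by (simp add: c_def)
    have "(c,d) \<in> carrier (U6m m)" using c d by (simp add: carrier_U)
    moreover have "z = (c,d) \<otimes>\<^bsub>U6m m\<^esub> (a,b) \<otimes>\<^bsub>U6m m\<^esub> inv\<^bsub>U6m m\<^esub> (c,d)"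
      unfolding conj_U[OF m a b c d] z ec ..
    ultimately show "z \<in> conj_class (U6m m) (a,b)" unfolding conj_class_def by blast
  qed
qed

lemma Hset: assumes b: "b < 3"
  shows "{H ea e b d | e d. d < 3} = (if ea then (if b = 0 then {0} else {1,2}) else {0,1,2})"
proof -
  have "{H ea e b d | e d. d < 3} = (\<Union>e\<in>UNIV. \<Union>d\<in>{0,1,2}. {H ea e b d})"
    by (auto simp: lt3)
  also have "\<dots> = {H ea True b 0, H ea True b 1, H ea True b 2, H ea False b 0, H ea False b 1, H ea False b 2}"
    by (auto simp: UNIV_bool)
  finally have eq: "{H ea e b d | e d. d < 3} = {H ea True b 0, H ea True b 1, H ea True b 2, H ea False b 0, H ea False b 1, H ea False b 2}" .
  have "b = 0 \<or> b = 1 \<or> b = 2" using b by auto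
  then show ?thesis unfolding eq by (elim disjE; cases ea) (simp_all add: H_def numeral_2_eq_2 insert_commute)
qed

definition Ocl :: "nat \<Rightarrow> (nat \<times> nat) set" where "Ocl a = {a} \<times> {0,1,2}"
definition Ecl :: "nat \<Rightarrow> (nat \<times> nat) set" where "Ecl a = {a} \<times> {1,2}"

lemma class_eval: assumes m: "m > 0" and a: "a < 2*m" and b: "b < 3"
  shows "conj_class (U6m m) (a,b) = (if even a then (if b = 0 then {(a,0)} else Ecl a) else Ocl a)"
  unfolding conj_class_U[OF m a b] Hset[OF b] by (auto simp: Ocl_def Ecl_def)

lemma comm_U: "(a,b) \<otimes>\<^bsub>U6m m\<^esub> (c,d) = (c,d) \<otimes>\<^bsub>U6m m\<^esub> (a,b) \<longleftrightarrow>
   ((if even c then b else (3-b) mod 3) + d) mod 3 = ((if even a then d else (3-d) mod 3) + b) mod 3"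
  by (simp add: mult_U add.commute)

lemma center_U: assumes m: "m > 0"
  shows "group_center (U6m m) = {(a,0) | a. a < 2*m \<and> even a}"
proof (rule Set.set_eqI)
  fix z :: "nat \<times> nat"
  obtain a b where z: "z = (a,b)" by fastforce
  show "z \<in> group_center (U6m m) \<longleftrightarrow> z \<in> {(a,0) | a. a < 2*m \<and> even a}"
  proof
    assume zc: "z \<in> group_center (U6m m)"
    then have zc1: "(a,b) \<in> carrier (U6m m)" and zc2: "\<forall>g \<in> carrier (U6m m). (a,b) \<otimes>\<^bsub>U6m m\<^esub> g = g \<otimes>\<^bsub>U6m m\<^esub> (a,b)"
      unfolding group_center_def z by auto
    have a: "a < 2*m" and b: "b < 3" using zc1 by (auto simp: carrier_U)
    have "(0,1) \<in> carrier (U6m m)" "(1,0) \<in> carrier (U6m m)" using m by (auto simp: carrier_U)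
    then have h1: "(a,b) \<otimes>\<^bsub>U6m m\<^esub> (0,1) = (0,1) \<otimes>\<^bsub>U6m m\<^esub> (a,b)"
      and h2: "(a,b) \<otimes>\<^bsub>U6m m\<^esub> (1,0) = (1,0) \<otimes>\<^bsub>U6m m\<^esub> (a,b)" using zc2 by auto
    from h1 have ea: "even a" unfolding comm_U using b by (cases "even a") (auto simp: lt3)
    moreover from h2 have "b = 0" unfolding comm_U using b ea by (auto simp: lt3)
    ultimately show "z \<in> {(a,0) | a. a < 2*m \<and> even a}" using a z by auto
  next
    assume "z \<in> {(a,0) | a. a < 2*m \<and> even a}"
    then have a: "a < 2*m" "even a" and b: "b = 0" using z by auto
    have "\<forall>g \<in> carrier (U6m m). (a,b) \<otimes>\<^bsub>U6m m\<^esub> g = g \<otimes>\<^bsub>U6m m\<^esub> (a,b)"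
    proof
      fix g assume g: "g \<in> carrier (U6m m)"
      obtain c d where gcd: "g = (c,d)" by fastforce
      have d: "d < 3" using g gcd by (auto simp: carrier_U)
      show "(a,b) \<otimes>\<^bsub>U6m m\<^esub> g = g \<otimes>\<^bsub>U6m m\<^esub> (a,b)"
        unfolding gcd comm_U using a b d by auto
    qed
    then show "z \<in> group_center (U6m m)" unfolding group_center_def z using a b by (auto simp: carrier_U)
  qed
qed


definition Os :: "nat \<Rightarrow> (nat \<times> nat) set set" where "Os m = Ocl ` {a. a < 2*m \<and> odd a}"
definition Es :: "nat \<Rightarrow> (nat \<times> nat) set set" where "Es m = Ecl ` {a. a < 2*m \<and> even a}"

lemma verts: assumes m: "m > 0" shows "nccc_vertices (U6m m) = Os m \<union> Es m"
proof (rule Set.set_eqI)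
  fix C
  show "C \<in> nccc_vertices (U6m m) \<longleftrightarrow> C \<in> Os m \<union> Es m"
  proof
    assume "C \<in> nccc_vertices (U6m m)"
    then obtain x where x: "x \<in> carrier (U6m m)" "x \<notin> group_center (U6m m)" and C: "C = conj_class (U6m m) x"
      unfolding nccc_vertices_def by blast
    obtain a b where xab: "x = (a,b)" by fastforce
    have a: "a < 2*m" and b: "b < 3" using x xab by (auto simp: carrier_U)
    have nc: "\<not> (even a \<and> b = 0)" using x(2) xab a unfolding center_U[OF m] by auto
    show "C \<in> Os m \<union> Es m"
      unfolding C xab class_eval[OF m a b] using nc a by (auto simp: Os_def Es_def)
  next
    assume "C \<in> Os m \<union> Es m"
    then show "C \<in> nccc_vertices (U6m m)"
    proof
      assume "C \<in> Os m"
      then obtain a where a: "a < 2*m" "odd a" and C: "C = Ocl a" by (auto simp: Os_def)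
      have "(a,0) \<in> carrier (U6m m) - group_center (U6m m)" using a by (auto simp: carrier_U center_U[OF m])
      moreover have "conj_class (U6m m) (a,0) = C" using class_eval[OF m a(1), of 0] a C by simp
      ultimately show ?thesis unfolding nccc_vertices_def by blast
    next
      assume "C \<in> Es m"
      then obtain a where a: "a < 2*m" "even a" and C: "C = Ecl a" by (auto simp: Es_def)
      have "(a,1) \<in> carrier (U6m m) - group_center (U6m m)" using a by (auto simp: carrier_U center_U[OF m])
      moreover have "conj_class (U6m m) (a,1) = C" using class_eval[OF m a(1), of 1] a C by simp
      ultimately show ?thesis unfolding nccc_vertices_def by blast
    qed
  qed
qed

lemma Ocl_ne_Ecl: "Ocl a \<noteq> Ecl c"
proof -
  have "(a,0) \<in> Ocl a" "(a,0) \<notin> Ecl c" by (simp_all add: Ocl_def Ecl_def)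
  then show ?thesis by metis
qed

lemma OE_disj: "Os m \<inter> Es m = {}"
  unfolding Os_def Es_def using Ocl_ne_Ecl by blast

lemma adj_iff: assumes C: "C \<in> Os m \<union> Es m" and D: "D \<in> Os m \<union> Es m"
  shows "nccc_adj (U6m m) C D \<longleftrightarrow> (C \<in> Os m) \<noteq> (D \<in> Os m)"
proof -
  have OO: "\<not> nccc_adj (U6m m) (Ocl a) (Ocl c)" for a c
  proof -
    have "(a,0) \<otimes>\<^bsub>U6m m\<^esub> (c,0) = (c,0) \<otimes>\<^bsub>U6m m\<^esub> (a,0)" unfolding comm_U by simp
    then show ?thesis unfolding nccc_adj_def Ocl_def by blast
  qed
  have EE: "\<not> nccc_adj (U6m m) (Ecl a) (Ecl c)" if "even a" "even c" for a c
  proof -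
    have "(a,1) \<otimes>\<^bsub>U6m m\<^esub> (c,1) = (c,1) \<otimes>\<^bsub>U6m m\<^esub> (a,1)" unfolding comm_U using that by simp
    then show ?thesis unfolding nccc_adj_def Ecl_def by blast
  qed
  have OE: "nccc_adj (U6m m) (Ocl a) (Ecl c) \<and> nccc_adj (U6m m) (Ecl c) (Ocl a)" if "odd a" "even c" for a c
  proof -
    have ne: "Ocl a \<noteq> Ecl c" by (rule Ocl_ne_Ecl)
    have nc: "x \<otimes>\<^bsub>U6m m\<^esub> y \<noteq> y \<otimes>\<^bsub>U6m m\<^esub> x" if "x \<in> Ocl a" "y \<in> Ecl c" for x y
    proof -
      obtain b where x: "x = (a,b)" "b = 0 \<or> b = 1 \<or> b = 2" using \<open>x \<in> Ocl a\<close> by (auto simp: Ocl_def)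
      obtain d where y: "y = (c,d)" "d = 1 \<or> d = 2" using \<open>y \<in> Ecl c\<close> by (auto simp: Ecl_def)
      show ?thesis unfolding x y comm_U using x(2) y(2) \<open>odd a\<close> \<open>even c\<close> by auto
    qed
    have 1: "nccc_adj (U6m m) (Ocl a) (Ecl c)" unfolding nccc_adj_def using ne nc by blast
    have 2: "nccc_adj (U6m m) (Ecl c) (Ocl a)" unfolding nccc_adj_def
    proof (intro conjI ballI)
      show "Ecl c \<noteq> Ocl a" using ne by simp
      fix x y assume "x \<in> Ecl c" "y \<in> Ocl a"
      then show "x \<otimes>\<^bsub>U6m m\<^esub> y \<noteq> y \<otimes>\<^bsub>U6m m\<^esub> x" using nc[of y x] by auto
    qed
    show ?thesis using 1 2 by blast
  qed
  have dj2: "Ecl a \<notin> Os m" for a unfolding Os_def using Ocl_ne_Ecl by (metis imageE)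
  from C show ?thesis
  proof
    assume "C \<in> Os m"
    then obtain a where a: "odd a" "a < 2*m" and Ca: "C = Ocl a" by (auto simp: Os_def)
    from D show ?thesis
    proof
      assume "D \<in> Os m"
      then obtain c where Dc: "D = Ocl c" by (auto simp: Os_def)
      show ?thesis using OO[of a c] Ca Dc \<open>C \<in> Os m\<close> \<open>D \<in> Os m\<close> by simp
    next
      assume "D \<in> Es m"
      then obtain c where c: "even c" and Dc: "D = Ecl c" by (auto simp: Es_def)
      show ?thesis using OE[OF a(1) c] Ca Dc \<open>C \<in> Os m\<close> dj2[of c] by simp
    qed
  next
    assume "C \<in> Es m"
    then obtain a where a: "even a" and Ca: "C = Ecl a" by (auto simp: Es_def)
    from D show ?thesis
    proof
      assume "D \<in> Os m"
      then obtain c where c: "odd c" and Dc: "D = Ocl c" by (auto simp: Os_def)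
      show ?thesis using OE[OF c a] Ca Dc \<open>D \<in> Os m\<close> dj2[of a] by simp
    next
      assume "D \<in> Es m"
      then obtain c where c: "even c" and Dc: "D = Ecl c" by (auto simp: Es_def)
      show ?thesis using EE[OF a c] Ca Dc dj2[of a] dj2[of c] by simp
    qed
  qed
qed

lemma card_odds: "card {a. a < 2*m \<and> odd (a::nat)} = m"
proof -
  have "{a. a < 2*m \<and> odd (a::nat)} = (\<lambda>k. 2*k+1) ` {..<m}"
  proof (rule Set.set_eqI)
    fix a show "a \<in> {a. a < 2*m \<and> odd (a::nat)} \<longleftrightarrow> a \<in> (\<lambda>k. 2*k+1) ` {..<m}"
      by (auto elim!: oddE)
  qed
  moreover have "inj_on (\<lambda>k::nat. 2*k+1) {..<m}" by (auto simp: inj_on_def)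
  ultimately show ?thesis by (simp add: card_image)
qed

lemma card_evens: "card {a. a < 2*m \<and> even (a::nat)} = m"
proof -
  have "{a. a < 2*m \<and> even (a::nat)} = (\<lambda>k. 2*k) ` {..<m}"
  proof (rule Set.set_eqI)
    fix a show "a \<in> {a. a < 2*m \<and> even (a::nat)} \<longleftrightarrow> a \<in> (\<lambda>k. 2*k) ` {..<m}"
      by (auto elim!: evenE)
  qed
  moreover have "inj_on (\<lambda>k::nat. 2*k) {..<m}" by (auto simp: inj_on_def)
  ultimately show ?thesis by (simp add: card_image)
qed

lemma card_Os: "card (Os m) = m"
proof -
  have "inj_on Ocl {a. a < 2*m \<and> odd a}" by (auto simp: inj_on_def Ocl_def)
  then show ?thesis unfolding Os_def by (simp add: card_image card_odds)
qed

lemma card_Es: "card (Es m) = m"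
proof -
  have "inj_on Ecl {a. a < 2*m \<and> even a}" by (auto simp: inj_on_def Ecl_def)
  then show ?thesis unfolding Es_def by (simp add: card_image card_evens)
qed

lemma fin_OE: "finite (Os m)" "finite (Es m)" by (auto simp: Os_def Es_def)



lemma bij_card: assumes "bij_betw f A B"
  shows "card {i\<in>A. P (f i)} = card {v\<in>B. P v}"
proof -
  have "f ` {i\<in>A. P (f i)} = {v\<in>B. P v}" using assms by (auto simp: bij_betw_def)
  moreover have "inj_on f {i\<in>A. P (f i)}" using assms by (auto simp: bij_betw_def inj_on_def)
  ultimately show ?thesis by (metis card_image)
qed

theorem corollary2p8:
  fixes m :: nat
  assumes "m \<ge> 2"
  shows "Spec (nccc_vertices (U6m m)) (nccc_adj (U6m m))
           = replicate_mset (2*m - 2) 0 + {# of_nat m, - of_nat m #}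
       \<and> L_Spec (nccc_vertices (U6m m)) (nccc_adj (U6m m))
           = {# 0 #} + replicate_mset (2*m - 2) (of_nat m) + {# 2 * of_nat m #}
       \<and> Q_Spec (nccc_vertices (U6m m)) (nccc_adj (U6m m))
           = L_Spec (nccc_vertices (U6m m)) (nccc_adj (U6m m))
       \<and> energy (nccc_vertices (U6m m)) (nccc_adj (U6m m)) = 2 * real m
       \<and> laplacian_energy (nccc_vertices (U6m m)) (nccc_adj (U6m m)) = 2 * real m
       \<and> signless_laplacian_energy (nccc_vertices (U6m m)) (nccc_adj (U6m m)) = 2 * real m"
proof -
  have m0: "m > 0" using assms by simp
  define V where "V = nccc_vertices (U6m m)"
  define Adj where "Adj = nccc_adj (U6m m)"
  have V: "V = Os m \<union> Es m" unfolding V_def by (rule verts[OF m0])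
  have finV: "finite V" using V fin_OE by simp
  have cardV: "card V = 2 * m" unfolding V using card_Un_disjoint[OF fin_OE OE_disj] card_Os card_Es by simp
  define n where "n = card V"
  define f where "f = vertex_enum V"
  have bij: "bij_betw f {0..<n} V" unfolding f_def vertex_enum_def n_def
    by (rule someI_ex[OF ex_bij_betw_nat_finite[OF finV]])
  have fV: "f i \<in> V" if "i < n" for i using bij that by (auto simp: bij_betw_def)
  define s where "s i = (f i \<in> Os m)" for i
  have cT: "card {i\<in>{0..<n}. s i} = m"
  proof -
    have "card {i\<in>{0..<n}. s i} = card {v\<in>V. v \<in> Os m}" unfolding s_def by (rule bij_card[OF bij])
    also have "{v\<in>V. v \<in> Os m} = Os m" using V by auto
    finally show ?thesis using card_Os by simp
  qed
  have cF: "card {i\<in>{0..<n}. \<not> s i} = m"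
  proof -
    have "card {i\<in>{0..<n}. \<not> s i} = card {v\<in>V. v \<notin> Os m}" unfolding s_def by (rule bij_card[OF bij])
    also have "{v\<in>V. v \<notin> Os m} = Es m" using V OE_disj by auto
    finally show ?thesis using card_Es by simp
  qed
  obtain p where p: "p < n" "s p"
  proof -
    have "{i\<in>{0..<n}. s i} \<noteq> {}" using cT m0 by (metis card.empty less_irrefl)
    then show ?thesis using that by auto
  qed
  obtain q where q: "q < n" "\<not> s q"
  proof -
    have "{i\<in>{0..<n}. \<not> s i} \<noteq> {}" using cF m0 by (metis card.empty less_irrefl)
    then show ?thesis using that by auto
  qed
  have adj: "Adj (f i) (f j) = (s i \<noteq> s j)" if "i < n" "j < n" for i j
    unfolding Adj_def s_def using adj_iff[of "f i" m "f j"] fV[OF that(1)] fV[OF that(2)] V by simp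
  have deg: "graph_degree V Adj v = m" if "v \<in> V" for v
  proof -
    have "{w\<in>V. Adj v w} = (if v \<in> Os m then Es m else Os m)"
      using adj_iff[of v m] that V OE_disj unfolding Adj_def by auto
    then show ?thesis unfolding graph_degree_def using card_Os card_Es by simp
  qed
  have nn: "n = 2 * m" using cardV n_def by simp
  have A: "adj_matrix V Adj = Mm n s 0 1"
    by (rule eq_matI) (auto simp: adj_matrix_def Mm_def n_def[symmetric] f_def[symmetric] adj)
  have D: "degree_matrix V Adj = mat n n (\<lambda>(i,j). if i = j then of_nat m else 0)"
    by (rule eq_matI) (auto simp: degree_matrix_def n_def[symmetric] f_def[symmetric] deg fV)
  have L: "laplacian_matrix V Adj = Mm n s (of_nat m) (-1)"
    unfolding laplacian_matrix_def A D by (rule eq_matI) (auto simp: Mm_def)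
  have Q: "signless_laplacian_matrix V Adj = Mm n s (of_nat m) 1"
    unfolding signless_laplacian_matrix_def A D by (rule eq_matI) (auto simp: Mm_def)
  note sM = spec_M[OF cT cF m0 p(1) p(2) q(1) q(2)]
  have S1: "Spec V Adj = replicate_mset (2*m - 2) 0 + {# of_nat m, - of_nat m #}"
    unfolding Spec_def mat_spectrum_def A sM using nn by simp
  have S2: "L_Spec V Adj = {# 0 #} + replicate_mset (2*m - 2) (of_nat m) + {# 2 * of_nat m #}"
    unfolding L_Spec_def mat_spectrum_def L sM using nn by simp
  have S3: "Q_Spec V Adj = L_Spec V Adj"
    unfolding Q_Spec_def L_Spec_def mat_spectrum_def Q L sM by simp
  have edges: "num_edges V Adj = m * m"
  proof -
    have eq: "{{v, w} | v w. v \<in> V \<and> w \<in> V \<and> Adj v w} = (\<lambda>(v,w). {v,w}) ` (Os m \<times> Es m)"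
    proof (rule Set.set_eqI)
      fix e
      show "e \<in> {{v, w} | v w. v \<in> V \<and> w \<in> V \<and> Adj v w} \<longleftrightarrow> e \<in> (\<lambda>(v,w). {v,w}) ` (Os m \<times> Es m)"
      proof
        assume "e \<in> {{v, w} | v w. v \<in> V \<and> w \<in> V \<and> Adj v w}"
        then obtain v w where e: "e = {v,w}" and vw: "v \<in> V" "w \<in> V" "Adj v w" by blast
        have vw': "v \<in> Os m \<union> Es m" "w \<in> Os m \<union> Es m" using vw(1,2) unfolding V .
        have "(v \<in> Os m) \<noteq> (w \<in> Os m)" using vw(3) adj_iff[OF vw'] unfolding Adj_def by simp
        show "e \<in> (\<lambda>(v,w). {v,w}) ` (Os m \<times> Es m)"
        proof (cases "v \<in> Os m")
          case True
          have hw: "w \<in> Es m" using True \<open>(v \<in> Os m) \<noteq> (w \<in> Os m)\<close> vw(2) unfolding V by blast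
          show ?thesis unfolding e by (rule image_eqI[where x = "(v,w)"]) (simp_all add: True hw)
        next
          case False
          have h: "v \<in> Es m" "w \<in> Os m" using False \<open>(v \<in> Os m) \<noteq> (w \<in> Os m)\<close> vw(1) unfolding V by blast+
          have c: "{v,w} = {w,v}" by (rule insert_commute)
          show ?thesis unfolding e c by (rule image_eqI[where x = "(w,v)"]) (simp_all add: h)
        qed
      next
        assume "e \<in> (\<lambda>(v,w). {v,w}) ` (Os m \<times> Es m)"
        then obtain x where x: "x \<in> Os m \<times> Es m" "e = (\<lambda>(v,w). {v,w}) x" by (rule imageE)
        obtain v w where xvw: "x = (v,w)" by fastforce
        have e: "e = {v,w}" and vw: "v \<in> Os m" "w \<in> Es m" using x xvw by auto
        have vn: "w \<notin> Os m" using vw(2) OE_disj by blast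
        have "Adj v w" using adj_iff[of v m w] vw vn unfolding Adj_def by simp
        moreover have "v \<in> V" "w \<in> V" using vw V by simp_all
        ultimately show "e \<in> {{v, w} | v w. v \<in> V \<and> w \<in> V \<and> Adj v w}" unfolding e
          by (intro CollectI exI[of _ v] exI[of _ w]) simp
      qed
    qed
    have inj: "inj_on (\<lambda>(v,w). {v,w}) (Os m \<times> Es m)"
    proof (rule inj_onI)
      fix x y assume x: "x \<in> Os m \<times> Es m" and y: "y \<in> Os m \<times> Es m" and e: "(\<lambda>(v,w). {v,w}) x = (\<lambda>(v,w). {v,w}) y"
      obtain v w v' w' where xy: "x = (v,w)" "y = (v',w')" by fastforce
      have "{v,w} = {v',w'}" using e xy by simp
      then have "(v = v' \<and> w = w') \<or> (v = w' \<and> w = v')" by (simp add: doubleton_eq_iff)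
      moreover have "v \<in> Os m" "w' \<in> Es m" using x y xy by auto
      moreover have "v \<notin> Es m" using \<open>v \<in> Os m\<close> OE_disj by blast
      ultimately show "x = y" using xy by auto
    qed
    show ?thesis unfolding num_edges_def eq card_image[OF inj] card_cartesian_product card_Os card_Es ..
  qed
  have avg: "avg_degree V Adj = real m"
    unfolding avg_degree_def edges cardV using m0 by simp
  have E1: "energy V Adj = 2 * real m" unfolding energy_def S1 by simp
  have E2: "laplacian_energy V Adj = 2 * real m" unfolding laplacian_energy_def S2 avg by simp
  have E3: "signless_laplacian_energy V Adj = 2 * real m" unfolding signless_laplacian_energy_def S3 S2 avg by simp
  show ?thesis using S1 S2 S3 E1 E2 E3 unfolding V_def Adj_def by blast
qed

end
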